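(* Let $A \in \mathbb{R}^{2\times 2}$ be nonnegative and irreducible. Then $r(t) := r\big((1-t)A + tA^{\top}\big)$, the spectral radius (Perron–Frobenius eigenvalue) of $(1-t)A+tA^\top$, is concave over $t\in(0,1)$, and strictly concave when $A$ has different (i.e. non-collinear) left and right Perron–Frobenius eigenvectors.
   Context: $r(M)$ denotes the spectral radius of a square matrix $M$. *)

theory Defs
  imports "HOL-Analysis.Convex" "Jordan_Normal_Form.Spectral_Radius"
begin

definition nonneg_mat :: "real mat \<Rightarrow> bool" where
  "nonneg_mat A \<longleftrightarrow> (\<forall>i < dim_row A. \<forall>j < dim_col A. A $$ (i, j) \<ge> 0)"

text \<open>Irreducibility of a nonnegative n x n matrix: its directed graph
  (edge i -> j iff A(i,j) > 0) is strongly connected, i.e. for all indices i, j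
  some positive power of A has a positive (i,j) entry.\<close>
definition irreducible_mat :: "real mat \<Rightarrow> bool" where
  "irreducible_mat A \<longleftrightarrow> (\<forall>i < dim_row A. \<forall>j < dim_row A.
      \<exists>k > 0. (A ^\<^sub>m k) $$ (i, j) > 0)"

definition rho :: "real mat \<Rightarrow> real" where
  "rho A = spectral_radius (map_mat complex_of_real A)"

definition strictly_concave_on :: "real set \<Rightarrow> (real \<Rightarrow> real) \<Rightarrow> bool" where
  "strictly_concave_on S f \<longleftrightarrow> convex S \<and>
    (\<forall>x\<in>S. \<forall>y\<in>S. \<forall>u. x \<noteq> y \<and> 0 < u \<and> u < 1 \<longrightarrow>
       f ((1 - u) * x + u * y) > (1 - u) * f x + u * f y)"

text \<open>Perron-Frobenius right eigenvector: entrywise positive v with A v = r(A) v;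
  left: entrywise positive w with A^T w = r(A) w.\<close>
definition pos_vec :: "real vec \<Rightarrow> bool" where
  "pos_vec v \<longleftrightarrow> (\<forall>i < dim_vec v. v $ i > 0)"

end

theory Submission
  imports Defs
begin

lemma sum2: "sum f {0..<(2::nat)} = f 0 + f 1"
  by (simp add: numeral_2_eq_2)

lemma det2: assumes "(A :: 'a :: comm_ring_1 mat) \<in> carrier_mat 2 2"
  shows "det A = A$$(0,0)*A$$(1,1) - A$$(0,1)*A$$(1,0)"
proof -
  have "det A = (\<Sum>i<2. A $$ (i,0) * cofactor A i 0)"
    by (rule laplace_expansion_column[OF assms], simp)
  also have "\<dots> = A$$(0,0) * cofactor A 0 0 + A$$(1,0) * cofactor A 1 0"
    by (simp add: numeral_2_eq_2)
  also have "cofactor A 0 0 = A$$(1,1)" using assms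
    by (simp add: cofactor_def mat_delete_def det_single)
  also have "cofactor A 1 0 = - A$$(0,1)" using assms
    by (simp add: cofactor_def mat_delete_def det_single)
  finally show ?thesis by (simp add: algebra_simps)
qed

lemma mat2_idx: "i < 2 \<Longrightarrow> (i::nat) = 0 \<or> i = 1" by auto

lemma eig2:
  assumes M: "(M::complex mat) \<in> carrier_mat 2 2"
  shows "eigenvalue M e \<longleftrightarrow> (M$$(0,0) - e) * (M$$(1,1) - e) - M$$(0,1)*M$$(1,0) = 0"
proof -
  have "eigenvalue M e \<longleftrightarrow> det (char_matrix M e) = 0" by (rule eigenvalue_det[OF M])
  also have "det (char_matrix M e) = (M$$(0,0) - e) * (M$$(1,1) - e) - M$$(0,1)*M$$(1,0)"
    using M by (subst det2, auto simp: char_matrix_def)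
  finally show ?thesis .
qed

lemma quad_fact:
  fixes a d x y S e :: complex
  assumes h: "S*S = ((a-d)/2)^2 + x*y"
  shows "(a - e) * (d - e) - x*y = (e - ((a+d)/2 + S)) * (e - ((a+d)/2 - S))"
proof -
  have "x*y = S*S - ((a-d)/2)^2" using h by simp
  then show ?thesis by (simp add: field_simps power2_eq_square)
qed

lemma rho2:
  assumes M: "M \<in> carrier_mat 2 2" and a: "M$$(0,0) \<ge> 0" and d: "M$$(1,1) \<ge> 0"
    and p: "M$$(0,1) * M$$(1,0) \<ge> 0"
  shows "rho M = (M$$(0,0) + M$$(1,1))/2 + sqrt(((M$$(0,0) - M$$(1,1))/2)^2 + M$$(0,1) * M$$(1,0))"
proof -
  define m where "m = (M$$(0,0) + M$$(1,1))/2"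
  define s where "s = sqrt(((M$$(0,0) - M$$(1,1))/2)^2 + M$$(0,1) * M$$(1,0))"
  have s0: "s \<ge> 0" unfolding s_def using p by simp
  have ss: "s^2 = ((M$$(0,0) - M$$(1,1))/2)^2 + M$$(0,1) * M$$(1,0)" unfolding s_def using p by simp
  have m0: "m \<ge> 0" unfolding m_def using a d by simp
  let ?C = "map_mat complex_of_real M"
  have C: "?C \<in> carrier_mat 2 2" using M by simp
  have ent: "?C $$ (i,j) = complex_of_real (M$$(i,j))" if "i<2" "j<2" for i j using M that by simp
  have ev: "eigenvalue ?C e \<longleftrightarrow> (e - of_real (m+s)) * (e - of_real (m - s)) = 0" for e
  proof -
    have "eigenvalue ?C e \<longleftrightarrow> (of_real (M$$(0,0)) - e) * (of_real (M$$(1,1)) - e) - of_real (M$$(0,1)) * of_real (M$$(1,0)) = 0"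
      unfolding eig2[OF C] by (simp add: ent)
    also have "(of_real (M$$(0,0)) - e) * (of_real (M$$(1,1)) - e) - of_real (M$$(0,1)) * of_real (M$$(1,0))
       = (e - of_real (m+s)) * (e - of_real (m - s))"
    proof -
      have "of_real (s^2) = (of_real (((M$$(0,0) - M$$(1,1))/2)^2 + M$$(0,1) * M$$(1,0)) :: complex)"
        using ss by simp
      then have "of_real s * of_real s = ((of_real (M$$(0,0)) - of_real (M$$(1,1)))/2)^2 + of_real (M$$(0,1)) * (of_real (M$$(1,0)) :: complex)"
        by (simp add: power2_eq_square)
      from quad_fact[OF this, of e] show ?thesis unfolding m_def by simp
    qed
    finally show ?thesis .
  qed
  have sp: "spectrum ?C \<subseteq> {of_real (m+s), of_real (m-s)}"
    unfolding spectrum_def using ev by auto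
  have "of_real (m+s) \<in> spectrum ?C" unfolding spectrum_def using ev by auto
  hence "norm (of_real (m+s) :: complex) \<le> spectral_radius ?C"
    by (intro spectral_radius_mem_max(2)[OF C]) auto
  moreover have "norm (complex_of_real (m+s)) = m+s" using m0 s0 by (simp only: norm_of_real)
  ultimately have le: "m + s \<le> spectral_radius ?C" by simp
  have "spectral_radius ?C \<in> norm ` spectrum ?C" by (rule spectral_radius_mem_max(1)[OF C]) auto
  then obtain x where x: "x \<in> spectrum ?C" "spectral_radius ?C = norm x" by auto
  have n1: "norm (complex_of_real (m+s)) = m+s" using m0 s0 by (simp only: norm_of_real)
  have n2: "norm (complex_of_real (m-s)) \<le> m+s"
  proof -
    have "norm (complex_of_real (m-s)) = \<bar>m-s\<bar>" by (rule norm_of_real)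
    thus ?thesis using m0 s0 by (simp add: abs_le_iff)
  qed
  have "x = complex_of_real (m+s) \<or> x = complex_of_real (m-s)" using x sp by auto
  then have "spectral_radius ?C \<le> m + s" using x(2) n1 n2 by auto
  with le show ?thesis unfolding rho_def m_def s_def by simp
qed

lemma pow_off01:
  assumes A: "(A::real mat) \<in> carrier_mat 2 2" and z: "A$$(0,1) = 0"
  shows "(A ^\<^sub>m k)$$(0,1) = 0"
proof (induction k)
  case 0 then show ?case using A by simp
next
  case (Suc k)
  have C: "A ^\<^sub>m k \<in> carrier_mat 2 2" using A by simp
  show ?case using A C Suc z
    by (simp add: scalar_prod_def sum2 row_def col_def)
qed

lemma pow_off10:
  assumes A: "(A::real mat) \<in> carrier_mat 2 2" and z: "A$$(1,0) = 0"
  shows "(A ^\<^sub>m k)$$(1,0) = 0"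
proof (induction k)
  case 0 then show ?case using A by simp
next
  case (Suc k)
  have C: "A ^\<^sub>m k \<in> carrier_mat 2 2" using A by simp
  show ?case using A C Suc z
    by (simp add: scalar_prod_def sum2 row_def col_def)
qed

lemma sqrt_conc:
  fixes u v X Y :: real
  assumes "u \<ge> 0" "v \<ge> 0" "u + v = 1" "X \<ge> 0" "Y \<ge> 0"
  shows "u * sqrt X + v * sqrt Y \<le> sqrt (u*X + v*Y)"
proof (rule real_le_rsqrt)
  have sx: "sqrt X ^ 2 = X" "sqrt Y ^2 = Y" using assms by auto
  have "(u * sqrt X + v * sqrt Y)^2 = u^2 * X + v^2 * Y + 2*u*v*sqrt X * sqrt Y"
    using sx by (simp add: power2_eq_square algebra_simps)
  moreover have "u*X + v*Y = (u+v)*(u*X + v*Y)" using assms by simp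
  moreover have "(u+v)*(u*X + v*Y) = u^2 * X + v^2 * Y + u*v*(X+Y)" by (simp add: power2_eq_square algebra_simps)
  moreover have "2*u*v*sqrt X * sqrt Y \<le> u*v*(X+Y)"
  proof -
    have "0 \<le> u*v*(sqrt X - sqrt Y)^2" using assms by simp
    also have "u*v*(sqrt X - sqrt Y)^2 = u*v*(X+Y) - 2*u*v*sqrt X * sqrt Y"
      using sx by (simp add: power2_eq_square algebra_simps)
    finally show ?thesis by simp
  qed
  ultimately show "(u * sqrt X + v * sqrt Y)^2 \<le> u*X + v*Y" by simp
qed

definition PP :: "real \<Rightarrow> real \<Rightarrow> real \<Rightarrow> real" where
  "PP b c t = ((1-t)*b + t*c) * ((1-t)*c + t*b)"

lemma PP_id:
  assumes "u + v = 1"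
  shows "PP b c (u*x + v*y) = u * PP b c x + v * PP b c y + u*v*(b-c)^2*(x-y)^2"
proof -
  have v: "v = 1 - u" using assms by simp
  show ?thesis unfolding PP_def v by (simp add: algebra_simps power2_eq_square)
qed

lemma PP_nonneg: "b > 0 \<Longrightarrow> c > 0 \<Longrightarrow> t \<in> {0<..<1} \<Longrightarrow> PP b c t \<ge> 0"
  unfolding PP_def by simp

lemma core:
  fixes q b c x y u v :: real
  assumes q: "q \<ge> 0" and b: "b > 0" and c: "c > 0" and x: "x \<in> {0<..<1}" and y: "y \<in> {0<..<1}"
    and u: "u \<ge> 0" and v: "v \<ge> 0" and uv: "u + v = 1"
  shows "u * sqrt (q + PP b c x) + v * sqrt (q + PP b c y) \<le> sqrt (q + PP b c (u*x + v*y))"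
    and "u > 0 \<Longrightarrow> v > 0 \<Longrightarrow> x \<noteq> y \<Longrightarrow> b \<noteq> c \<Longrightarrow>
       u * sqrt (q + PP b c x) + v * sqrt (q + PP b c y) < sqrt (q + PP b c (u*x + v*y))"
proof -
  have X: "q + PP b c x \<ge> 0" and Y: "q + PP b c y \<ge> 0"
    using PP_nonneg[OF b c x] PP_nonneg[OF b c y] q by auto
  have e: "q + PP b c (u*x + v*y) = u*(q + PP b c x) + v*(q + PP b c y) + u*v*(b-c)^2*(x-y)^2"
  proof -
    have qq: "q = q*u + q*v" using uv by (metis distrib_left mult_1_right)
    show ?thesis by (subst qq, simp add: PP_id[OF uv] algebra_simps)
  qed
  have s: "u * sqrt (q + PP b c x) + v * sqrt (q + PP b c y) \<le> sqrt (u*(q + PP b c x) + v*(q + PP b c y))"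
    by (rule sqrt_conc[OF u v uv X Y])
  have "u*v*(b-c)^2*(x-y)^2 \<ge> 0" using u v by simp
  then have "sqrt (u*(q + PP b c x) + v*(q + PP b c y)) \<le> sqrt (q + PP b c (u*x + v*y))"
    unfolding e by simp
  with s show "u * sqrt (q + PP b c x) + v * sqrt (q + PP b c y) \<le> sqrt (q + PP b c (u*x + v*y))"
    by linarith
  assume "u > 0" "v > 0" "x \<noteq> y" "b \<noteq> c"
  then have "u*v*(b-c)^2*(x-y)^2 > 0" by simp
  then have "sqrt (u*(q + PP b c x) + v*(q + PP b c y)) < sqrt (q + PP b c (u*x + v*y))"
    unfolding e by simp
  with s show "u * sqrt (q + PP b c x) + v * sqrt (q + PP b c y) < sqrt (q + PP b c (u*x + v*y))"
    by linarith
qed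

theorem theorem1:
  fixes A :: "real mat"
  assumes "A \<in> carrier_mat 2 2"
    and "nonneg_mat A"
    and "irreducible_mat A"
  shows "concave_on {0<..<1} (\<lambda>t. rho ((1 - t) \<cdot>\<^sub>m A + t \<cdot>\<^sub>m transpose_mat A)) \<and>
         ((\<exists>v w. v \<in> carrier_vec 2 \<and> w \<in> carrier_vec 2 \<and> pos_vec v \<and> pos_vec w \<and>
            A *\<^sub>v v = rho A \<cdot>\<^sub>v v \<and> transpose_mat A *\<^sub>v w = rho A \<cdot>\<^sub>v w \<and>
            (\<forall>c::real. w \<noteq> c \<cdot>\<^sub>v v))
         \<longrightarrow> strictly_concave_on {0<..<1} (\<lambda>t. rho ((1 - t) \<cdot>\<^sub>m A + t \<cdot>\<^sub>m transpose_mat A)))"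
proof -
  note A = assms(1)
  define a where "a = A$$(0,0)"
  define b where "b = A$$(0,1)"
  define c where "c = A$$(1,0)"
  define d where "d = A$$(1,1)"
  have nn: "\<And>i j. i < 2 \<Longrightarrow> j < 2 \<Longrightarrow> A$$(i,j) \<ge> 0"
    using assms(2) A unfolding nonneg_mat_def by auto
  have a0: "a \<ge> 0" and d0: "d \<ge> 0" and b0: "b \<ge> 0" and c0: "c \<ge> 0"
    unfolding a_def b_def c_def d_def by (auto intro: nn)
  have bp: "b > 0"
  proof (rule ccontr)
    assume "\<not> b > 0" then have "A$$(0,1) = 0" using b0 b_def by simp
    moreover have "\<exists>k>0. (A ^\<^sub>m k)$$(0,1) > 0"
    proof -
      have "dim_row A = 2" using A by simp
      then have "0 < dim_row A" "1 < dim_row A" by auto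
      then show ?thesis using assms(3) unfolding irreducible_mat_def by blast
    qed
    then obtain k where "(A ^\<^sub>m k)$$(0,1) > 0" by blast
    ultimately show False using pow_off01[OF A] by simp
  qed
  have cp: "c > 0"
  proof (rule ccontr)
    assume "\<not> c > 0" then have "A$$(1,0) = 0" using c0 c_def by simp
    moreover have "\<exists>k>0. (A ^\<^sub>m k)$$(1,0) > 0"
    proof -
      have "dim_row A = 2" using A by simp
      then have "1 < dim_row A" "0 < dim_row A" by auto
      then show ?thesis using assms(3) unfolding irreducible_mat_def by blast
    qed
    then obtain k where "(A ^\<^sub>m k)$$(1,0) > 0" by blast
    ultimately show False using pow_off10[OF A] by simp
  qed
  define f where "f = (\<lambda>t. rho ((1 - t) \<cdot>\<^sub>m A + t \<cdot>\<^sub>m transpose_mat A))"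
  define q where "q = ((a - d)/2)^2"
  define m where "m = (a + d)/2"
  have q0: "q \<ge> 0" unfolding q_def by simp
  have fe: "f t = m + sqrt (q + PP b c t)" if t: "t \<in> {0<..<1}" for t
  proof -
    let ?M = "(1 - t) \<cdot>\<^sub>m A + t \<cdot>\<^sub>m transpose_mat A"
    have MC: "?M \<in> carrier_mat 2 2" using A by auto
    have ent: "?M $$ (i,j) = (1-t)*A$$(i,j) + t*A$$(j,i)" if "i<2" "j<2" for i j
      using A that by auto
    have e00: "?M $$ (0,0) = a" using ent[of 0 0] unfolding a_def by (simp add: algebra_simps)
    have e11: "?M $$ (1,1) = d" using ent[of 1 1] unfolding d_def by (simp add: algebra_simps)
    have e01: "?M $$ (0,1) = (1-t)*b + t*c" using ent[of 0 1] unfolding b_def c_def by simp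
    have e10: "?M $$ (1,0) = (1-t)*c + t*b" using ent[of 1 0] unfolding b_def c_def by simp
    have p: "?M $$ (0,1) * ?M $$ (1,0) \<ge> 0" unfolding e01 e10
      using PP_nonneg[OF bp cp t] unfolding PP_def .
    show ?thesis unfolding f_def rho2[OF MC, unfolded e00 e11, OF a0 d0 p] e01 e10
      unfolding m_def q_def PP_def by simp
  qed
  have conc: "concave_on {0<..<1} f"
    unfolding concave_on_iff
  proof (intro conjI ballI allI impI)
    fix x y u v :: real
    assume x: "x \<in> {0<..<1::real}" and y: "y \<in> {0<..<1::real}" and u: "u \<ge> 0" and v: "v \<ge> 0" and uv: "u + v = 1"
    have xy: "u*x + v*y \<in> {0<..<1}"
      using convexD[OF convex_real_interval(8) x y u v uv] by simp
    have mm: "m = u*m + v*m" using uv by (metis distrib_right mult_1_left)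
    show "u * f x + v * f y \<le> f (u *\<^sub>R x + v *\<^sub>R y)"
      using core(1)[OF q0 bp cp x y u v uv] unfolding fe[OF x] fe[OF y] fe[OF xy] real_scaleR_def
      by (subst (3) mm) (simp add: algebra_simps)
  qed simp
  have strict: "strictly_concave_on {0<..<1} f" if bc: "b \<noteq> c"
    unfolding strictly_concave_on_def
  proof (intro conjI ballI allI impI)
    fix x y u :: real
    assume x: "x \<in> {0<..<1::real}" and y: "y \<in> {0<..<1::real}" and h: "x \<noteq> y \<and> 0 < u \<and> u < 1"
    have xy: "(1-u)*x + u*y \<in> {0<..<1}"
      using convexD[OF convex_real_interval(8) x y, of "1-u" u] h by simp
    have mm: "m = (1-u)*m + u*m" by (simp add: algebra_simps)
    show "(1 - u) * f x + u * f y < f ((1 - u) * x + u * y)"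
      using core(2)[OF q0 bp cp x y _ _ _ _ _ _ bc, of "1-u" u] h unfolding fe[OF x] fe[OF y] fe[OF xy]
      by (subst (3) mm) (simp add: algebra_simps)
  qed simp
  have bc: "b \<noteq> c" if ex: "\<exists>v w. v \<in> carrier_vec 2 \<and> w \<in> carrier_vec 2 \<and> pos_vec v \<and> pos_vec w \<and>
            A *\<^sub>v v = rho A \<cdot>\<^sub>v v \<and> transpose_mat A *\<^sub>v w = rho A \<cdot>\<^sub>v w \<and>
            (\<forall>c::real. w \<noteq> c \<cdot>\<^sub>v v)"
  proof
    assume bc: "b = c"
    from ex obtain v w where v: "v \<in> carrier_vec 2" and w: "w \<in> carrier_vec 2" and pv: "pos_vec v" and pw: "pos_vec w"
      and ev: "A *\<^sub>v v = rho A \<cdot>\<^sub>v v" and ew: "transpose_mat A *\<^sub>v w = rho A \<cdot>\<^sub>v w"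
      and nc: "\<forall>c::real. w \<noteq> c \<cdot>\<^sub>v v" by blast
    define r where "r = rho A"
    have v0: "v$0 > 0" using pv v unfolding pos_vec_def by auto
    have w0: "w$0 > 0" using pw w unfolding pos_vec_def by auto
    have "(A *\<^sub>v v)$0 = r * v$0" using ev v r_def by simp
    then have ev0: "a * v$0 + b * v$1 = r * v$0" using A v unfolding a_def b_def
      by (simp add: scalar_prod_def sum2 row_def)
    have "(transpose_mat A *\<^sub>v w)$0 = r * w$0" using ew w r_def by simp
    then have ew0: "a * w$0 + c * w$1 = r * w$0" using A w unfolding a_def c_def
      by (simp add: scalar_prod_def sum2 row_def)
    have key: "w$1 * v$0 = w$0 * v$1"
    proof -
      have "b * w$1 = (r - a) * w$0" using ew0 bc by (simp add: algebra_simps)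
      then have "b * (w$1 * v$0) = (r - a) * w$0 * v$0" by (metis mult.assoc)
      also have "\<dots> = w$0 * (b * v$1)"
      proof -
        have h: "b * v$1 = (r - a) * v$0" using ev0 by (simp add: algebra_simps)
        show ?thesis by (subst h) (simp add: mult_ac)
      qed
      finally show ?thesis using bp by simp
    qed
    have "w = (w$0 / v$0) \<cdot>\<^sub>v v"
    proof (rule eq_vecI)
      show "dim_vec w = dim_vec ((w$0 / v$0) \<cdot>\<^sub>v v)" using v w by simp
      fix i assume "i < dim_vec ((w$0 / v$0) \<cdot>\<^sub>v v)"
      then have "i = 0 \<or> i = 1" using v by auto
      then show "w $ i = ((w$0 / v$0) \<cdot>\<^sub>v v) $ i" using v v0 key
        by (auto simp: field_simps)
    qed
    with nc show False by blast
  qed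
  show ?thesis using conc strict bc unfolding f_def by blast
qed

end
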